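(* If $m$ is prime, then $\dim\mathcal{H}_{(m)}=\frac{(m-1)!-(m-1)}{m}+m-1$.
   Context: $\mathcal{H}_{(m)}$ is the quotient of the span in $\mathbb{C}[\mathbb{S}_m]$ of all $m$-cycles by the span of those generalized Vassiliev elements all of whose terms are $m$-cycles, where for $m\ge2$, $\gamma\in\mathbb{S}_{m-1}$, $q\in[m-1]\cup\{*\}$, $t\in\{0,\dots,m-1\}$, $\alpha_t\in\mathbb{S}_m$ is obtained by inserting a new point $x$ into the line $1<\dots<m-1$ in the gap between $t$ and $t+1$, relabeling in order, acting as $\gamma$ on old points except $q\mapsto x\mapsto\gamma(q)$ if $q\ne*$, $x$ fixed if $q=*$, and for a cycle $v$ of $\gamma$, $E(\gamma,q,v)=\sum_{j\in v}(\alpha_{j-1}-\alpha_j)$. *)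

theory Defs
  imports "HOL-Analysis.Analysis" "HOL-Library.Function_Algebras"
begin

text \<open>Permutations of [m] = {1..m} are functions nat => nat permuting {1..m}.
  The group algebra C[S_m] is modelled inside the complex vector space of all
  functions (nat => nat) => complex (pointwise operations); the basis element
  of a permutation p is its indicator function.\<close>

definition cscale :: "complex \<Rightarrow> ((nat \<Rightarrow> nat) \<Rightarrow> complex) \<Rightarrow> ((nat \<Rightarrow> nat) \<Rightarrow> complex)" where
  "cscale c f = (\<lambda>x. c * f x)"

definition basis_el :: "(nat \<Rightarrow> nat) \<Rightarrow> ((nat \<Rightarrow> nat) \<Rightarrow> complex)" where
  "basis_el p = (\<lambda>s. if s = p then 1 else 0)"

definition is_m_cycle :: "nat \<Rightarrow> (nat \<Rightarrow> nat) \<Rightarrow> bool" where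
  "is_m_cycle m p \<longleftrightarrow> p permutes {1..m} \<and>
     (\<forall>i\<in>{1..m}. \<forall>j\<in>{1..m}. \<exists>k. (p ^^ k) i = j)"

text \<open>v is (the point set of) a cycle of gamma in S_n (fixed points are 1-cycles).\<close>
definition is_cycle_of :: "nat \<Rightarrow> (nat \<Rightarrow> nat) \<Rightarrow> nat set \<Rightarrow> bool" where
  "is_cycle_of n \<gamma> v \<longleftrightarrow> (\<exists>i\<in>{1..n}. v = {(\<gamma> ^^ k) i | k. True})"

text \<open>Relabelling of an old point i of the line 1<...<m-1 after inserting a new
  point x in the gap between t and t+1; x itself receives label t+1.\<close>
definition new_label :: "nat \<Rightarrow> nat \<Rightarrow> nat" where
  "new_label t i = (if i \<le> t then i else i + 1)"

definition old_label :: "nat \<Rightarrow> nat \<Rightarrow> nat" where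
  "old_label t y = (if y \<le> t then y else y - 1)"

text \<open>alpha_t in S_m for gamma in S_{m-1} and q in [m-1] \<union> {*}
  (q = None stands for *, q = Some i for i in [m-1]).\<close>
definition alpha :: "nat \<Rightarrow> (nat \<Rightarrow> nat) \<Rightarrow> nat option \<Rightarrow> nat \<Rightarrow> (nat \<Rightarrow> nat)" where
  "alpha m \<gamma> q t = (\<lambda>y.
     if y = t + 1 then (case q of None \<Rightarrow> t + 1 | Some q' \<Rightarrow> new_label t (\<gamma> q'))
     else if y \<in> {1..m} then
       (if q = Some (old_label t y) then t + 1 else new_label t (\<gamma> (old_label t y)))
     else y)"

definition vass :: "nat \<Rightarrow> (nat \<Rightarrow> nat) \<Rightarrow> nat option \<Rightarrow> nat set \<Rightarrow> ((nat \<Rightarrow> nat) \<Rightarrow> complex)" where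
  "vass m \<gamma> q v = (\<Sum>j\<in>v. basis_el (alpha m \<gamma> q (j - 1)) - basis_el (alpha m \<gamma> q j))"

definition vass_cyc :: "nat \<Rightarrow> ((nat \<Rightarrow> nat) \<Rightarrow> complex) set" where
  "vass_cyc m = {vass m \<gamma> q v | \<gamma> q v.
      \<gamma> permutes {1..m-1} \<and> (q = None \<or> (\<exists>i\<in>{1..m-1}. q = Some i)) \<and>
      is_cycle_of (m - 1) \<gamma> v \<and>
      (\<forall>j\<in>v. is_m_cycle m (alpha m \<gamma> q (j - 1)) \<and> is_m_cycle m (alpha m \<gamma> q j))}"

definition cycle_span :: "nat \<Rightarrow> ((nat \<Rightarrow> nat) \<Rightarrow> complex) set" where
  "cycle_span m = module.span cscale {basis_el p | p. is_m_cycle m p}"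

text \<open>dim H_(m) = dim (span of m-cycles) - dim (span of the relations), the
  dimension of the quotient of a finite-dimensional space by a subspace.\<close>
definition dimH :: "nat \<Rightarrow> nat" where
  "dimH m = vector_space.dim cscale (cycle_span m)
            - vector_space.dim cscale (module.span cscale (vass_cyc m))"

end

theory Submission
  imports Defs "HOL-Combinatorics.Cycles" "HOL-Combinatorics.Multiset_Permutations"
begin


interpretation V: vector_space cscale
  by unfold_locales (auto simp: cscale_def fun_eq_iff algebra_simps)

lemma sum_fun_app: "(sum f A) x = sum (\<lambda>a. f a x) A"
  by (induct A rule: infinite_finite_induct) auto

lemma basis_el_inj: "inj basis_el"
  unfolding inj_def basis_el_def fun_eq_iff by (metis one_neq_zero)

lemma indep_basis: "V.independent (basis_el ` A)"
proof (subst V.independent_explicit_module, intro allI impI)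
  fix t u v
  assume t: "finite t" "t \<subseteq> basis_el ` A" "(\<Sum>v\<in>t. cscale (u v) v) = 0" "v \<in> t"
  then obtain p where p: "v = basis_el p" by auto
  have "(\<Sum>w\<in>t. cscale (u w) w) p = 0" using t(3) by simp
  moreover have "(\<Sum>w\<in>t. cscale (u w) w) p = (\<Sum>w\<in>t. u w * w p)"
    by (simp add: cscale_def sum_fun_app)
  moreover have "(\<Sum>w\<in>t. u w * w p) = u v"
  proof -
    have "(\<Sum>w\<in>t. u w * w p) = (\<Sum>w\<in>{v}. u w * w p)"
    proof (rule sum.mono_neutral_right)
      show "\<forall>i\<in>t - {v}. u i * i p = 0"
      proof
        fix i assume i: "i \<in> t - {v}"
        then obtain q where q: "i = basis_el q" using t(2) by auto
        hence "q \<noteq> p" using i p by auto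
        thus "u i * i p = 0" using q by (simp add: basis_el_def)
      qed
    qed (use t in auto)
    thus ?thesis by (simp add: p basis_el_def)
  qed
  ultimately show "u v = 0" by simp
qed

lemma dim_basis: "finite A \<Longrightarrow> V.dim (basis_el ` A) = card A"
  using V.dim_eq_card_independent[OF indep_basis] card_image basis_el_inj
  by (metis inj_on_subset subset_UNIV)

lemma dim_union_le:
  assumes "finite A" "finite B"
  shows "V.dim (A \<union> B) \<le> V.dim A + card B"
proof -
  obtain Ba where Ba: "Ba \<subseteq> A" "V.independent Ba" "A \<subseteq> V.span Ba" "card Ba = V.dim A"
    using V.basis_exists by blast
  have "A \<union> B \<subseteq> V.span (Ba \<union> B)"
    using Ba(3) V.span_mono[of Ba "Ba \<union> B"] V.span_superset[of "Ba \<union> B"] by blast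
  hence "V.dim (A \<union> B) \<le> card (Ba \<union> B)"
    using V.dim_le_card assms Ba(1) by (meson finite_UnI finite_subset)
  also have "\<dots> \<le> card Ba + card B" by (rule card_Un_le)
  finally show ?thesis using Ba(4) by simp
qed



definition rho :: "nat \<Rightarrow> nat \<Rightarrow> nat \<Rightarrow> nat" where
  "rho m t y = (if y \<le> t then y else if y < m then y + 1 else if y = m then t + 1 else y)"
definition rhoi :: "nat \<Rightarrow> nat \<Rightarrow> nat \<Rightarrow> nat" where
  "rhoi m t y = (if y \<le> t then y else if y = t + 1 then m else if y \<le> m then y - 1 else y)"

lemma rho_rhoi: "t < m \<Longrightarrow> rho m t \<circ> rhoi m t = id"
  by (auto simp: fun_eq_iff rho_def rhoi_def)
lemma rhoi_rho: "t < m \<Longrightarrow> rhoi m t \<circ> rho m t = id"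
  by (auto simp: fun_eq_iff rho_def rhoi_def)

lemma permutes_of_inverse:
  assumes "s \<circ> si = id" "si \<circ> s = id" "\<And>x. x \<notin> S \<Longrightarrow> s x = x"
  shows "s permutes S"
  unfolding permutes_def
proof (intro conjI allI impI)
  fix y
  show "\<exists>!x. s x = y"
  proof
    show "s (si y) = y" using assms(1) by (metis comp_apply id_apply)
    fix x assume "s x = y"
    thus "x = si y" using assms(2) by (metis comp_apply id_apply)
  qed
qed (use assms in auto)

lemma rho_permutes: "t < m \<Longrightarrow> rho m t permutes {1..m}"
  by (rule permutes_of_inverse[OF rho_rhoi rhoi_rho]) (auto simp: rho_def)

lemma funpow_conj:
  assumes "si \<circ> s = id" "s \<circ> si = id"
  shows "(s \<circ> p \<circ> si) ^^ k = s \<circ> (p ^^ k) \<circ> si"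
proof (induct k)
  case 0
  then show ?case using assms(2) by simp
next
  case (Suc k)
  have "(s \<circ> p \<circ> si) ^^ Suc k = (s \<circ> p \<circ> si) \<circ> (s \<circ> (p ^^ k) \<circ> si)"
    by (simp only: funpow.simps(2) Suc)
  also have "\<dots> = s \<circ> p \<circ> (si \<circ> s) \<circ> (p ^^ k) \<circ> si" by (simp add: comp_assoc)
  also have "\<dots> = s \<circ> (p ^^ Suc k) \<circ> si" using assms by (simp add: comp_assoc)
  finally show ?case .
qed

lemma mcyc_conj:
  assumes s: "s permutes {1..m}" "s \<circ> si = id" "si \<circ> s = id" and p: "is_m_cycle m p"
  shows "is_m_cycle m (s \<circ> p \<circ> si)"
proof -
  have si_eq: "si = inv s"
    using assms(2,3) by (metis inv_unique_comp)
  have sip: "si permutes {1..m}" using si_eq permutes_inv[OF s(1)] by simp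
  have perm: "s \<circ> p \<circ> si permutes {1..m}"
    using p s(1) sip unfolding is_m_cycle_def by (intro permutes_compose) auto
  show ?thesis unfolding is_m_cycle_def
  proof (intro conjI perm ballI)
    fix i j assume ij: "i \<in> {1..m}" "j \<in> {1..m}"
    have "si i \<in> {1..m}" "si j \<in> {1..m}" using ij permutes_in_image[OF sip] by blast+
    then obtain k where k: "(p ^^ k) (si i) = si j" using p unfolding is_m_cycle_def by blast
    have "((s \<circ> p \<circ> si) ^^ k) i = s ((p ^^ k) (si i))"
      by (simp add: funpow_conj[OF s(3) s(2)])
    also have "\<dots> = j" using k s(2) by (metis comp_apply id_apply)
    finally show "\<exists>k. ((s \<circ> p \<circ> si) ^^ k) i = j" by blast
  qed
qed

lemma mcyc_no_fix:
  assumes "is_m_cycle m p" "2 \<le> m" "y \<in> {1..m}"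
  shows "p y \<noteq> y"
proof
  assume fx: "p y = y"
  have pk: "(p ^^ k) y = y" for k by (induct k) (simp_all add: fx)
  obtain z where z: "z \<in> {1..m}" "z \<noteq> y" using assms(2,3)
  proof (cases "y = 1")
    case True then show ?thesis using that[of 2] assms(2) by auto
  next
    case False then show ?thesis using that[of 1] assms(2) by auto
  qed
  then obtain k where "(p ^^ k) y = z" using assms(1,3) unfolding is_m_cycle_def by blast
  thus False using pk z by simp
qed

lemma mcyc_permutes: "is_m_cycle m p \<Longrightarrow> p permutes {1..m}"
  by (simp add: is_m_cycle_def)

lemma rho_nl: "z \<in> {1..m-1} \<Longrightarrow> rho m t z = new_label t z"
  by (auto simp: rho_def new_label_def)

lemma alpha_top:
  assumes "2 \<le> m" "\<gamma> q \<in> {1..m-1}"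
  shows "alpha m \<gamma> (Some q) (m-1) m = \<gamma> q"
proof -
  have "m = (m - 1) + 1" using assms(1) by simp
  hence "alpha m \<gamma> (Some q) (m-1) m = new_label (m-1) (\<gamma> q)"
    unfolding alpha_def by (metis option.simps(5))
  thus ?thesis using assms by (simp add: new_label_def)
qed

lemma alpha_old:
  assumes "2 \<le> m" "o' \<in> {1..m-1}" "\<gamma> o' \<in> {1..m-1}"
  shows "alpha m \<gamma> (Some q) (m-1) o' = (if q = o' then m else \<gamma> o')"
proof -
  have ne: "o' \<noteq> m - 1 + 1" "o' \<in> {1..m}" using assms by auto
  have ol: "old_label (m-1) o' = o'" using assms by (simp add: old_label_def)
  have nl: "new_label (m-1) (\<gamma> o') = \<gamma> o'" using assms by (simp add: new_label_def)
  show ?thesis unfolding alpha_def using ne ol nl assms(1) by auto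
qed

lemma alpha_conj:
  assumes m: "2 \<le> m" and g: "\<gamma> permutes {1..m-1}" and q: "q \<in> {1..m-1}" and t: "t \<le> m - 1"
  shows "alpha m \<gamma> (Some q) t = rho m t \<circ> alpha m \<gamma> (Some q) (m-1) \<circ> rhoi m t"
proof
  fix y
  have gi: "\<And>z. z \<in> {1..m-1} \<Longrightarrow> \<gamma> z \<in> {1..m-1}" using permutes_in_image[OF g] by blast
  have gq: "\<gamma> q \<in> {1..m-1}" using gi q by blast
  show "alpha m \<gamma> (Some q) t y = (rho m t \<circ> alpha m \<gamma> (Some q) (m-1) \<circ> rhoi m t) y"
  proof (cases "y = t + 1")
    case True
    have l: "alpha m \<gamma> (Some q) t y = new_label t (\<gamma> q)"
      unfolding alpha_def using True by simp
    have r: "rhoi m t y = m" using True by (simp add: rhoi_def)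
    show ?thesis using l r alpha_top[of m \<gamma> q, OF m gq] rho_nl[OF gq] by simp
  next
    case False
    show ?thesis
    proof (cases "y \<in> {1..m}")
      case True
      define o' where "o' = old_label t y"
      have o: "o' \<in> {1..m-1}" "rhoi m t y = o'" using True False t m
        by (auto simp: o'_def old_label_def rhoi_def)
      have go: "\<gamma> o' \<in> {1..m-1}" using gi o by blast
      have l: "alpha m \<gamma> (Some q) t y = (if q = o' then t + 1 else new_label t (\<gamma> o'))"
        unfolding alpha_def using True False o'_def by simp
      have r: "rho m t (if q = o' then m else \<gamma> o') = (if q = o' then t + 1 else new_label t (\<gamma> o'))"
      proof (cases "q = o'")
        case True
        then show ?thesis using t m by (simp add: rho_def)
      next
        case False
        then show ?thesis using rho_nl[OF go] by simp
      qed
      show ?thesis using l r o alpha_old[of m o' \<gamma> q, OF m o(1) go] by simp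
    next
      case False
      have l: "alpha m \<gamma> (Some q) t y = y"
        unfolding alpha_def using False \<open>y \<noteq> t + 1\<close> by (simp only: if_False)
      have r: "rhoi m t y = y" using False t m by (auto simp: rhoi_def)
      have a: "alpha m \<gamma> (Some q) (m-1) y = y" unfolding alpha_def using False m by auto
      have r2: "rho m t y = y" using False t m by (auto simp: rho_def)
      show ?thesis using l r a r2 by simp
    qed
  qed
qed



lemma nl_inj: "new_label t a = new_label t b \<Longrightarrow> a = b"
  by (auto simp: new_label_def split: if_splits)

lemma nl_ne: "new_label t z \<noteq> t + 1"
  by (auto simp: new_label_def)

lemma alpha_nl:
  assumes "z \<in> {1..m-1}" "t \<le> m - 1"
  shows "alpha m \<gamma> (Some q) t (new_label t z) = (if z = q then t + 1 else new_label t (\<gamma> z))"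
proof -
  have "new_label t z \<in> {1..m}" "old_label t (new_label t z) = z"
    using assms by (auto simp: new_label_def old_label_def)
  thus ?thesis unfolding alpha_def using nl_ne[of t z] by auto
qed

lemma alpha_x: "alpha m \<gamma> (Some q) t (t + 1) = new_label t (\<gamma> q)"
  unfolding alpha_def by simp

lemma gpow_in:
  assumes "\<gamma> permutes S" "i \<in> S" shows "(\<gamma> ^^ k) i \<in> S"
  using permutes_in_image[OF permutes_funpow[OF assms(1)]] assms(2) by blast

lemma alpha_cover:
  assumes m: "2 \<le> m" and g: "\<gamma> permutes {1..m-1}" and q: "q \<in> {1..m-1}" and t: "t \<le> m - 1"
    and A: "is_m_cycle m (alpha m \<gamma> (Some q) t)" and i: "i \<in> {1..m-1}" and j: "j \<in> {1..m-1}"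
  shows "\<exists>k. (\<gamma> ^^ k) i = j"
proof -
  define A where "A = alpha m \<gamma> (Some q) t"
  define P where "P y \<longleftrightarrow> (\<exists>k. y = new_label t ((\<gamma> ^^ k) i)) \<or> (y = t + 1 \<and> (\<exists>k. q = (\<gamma> ^^ k) i))" for y
  have step: "P (A y)" if "P y" for y
  proof -
    from that consider (a) k where "y = new_label t ((\<gamma> ^^ k) i)"
      | (b) k where "y = t + 1" "q = (\<gamma> ^^ k) i" unfolding P_def by blast
    then show ?thesis
    proof cases
      case a
      have z: "(\<gamma> ^^ k) i \<in> {1..m-1}" using gpow_in[OF g i] .
      show ?thesis
      proof (cases "(\<gamma> ^^ k) i = q")
        case True
        then show ?thesis unfolding A_def a alpha_nl[OF z t] P_def by auto
      next
        case False
        then have "A y = new_label t ((\<gamma> ^^ Suc k) i)"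
          unfolding A_def a alpha_nl[OF z t] by simp
        then show ?thesis unfolding P_def by blast
      qed
    next
      case b
      have "A y = new_label t ((\<gamma> ^^ Suc k) i)" unfolding A_def b alpha_x by simp
      then show ?thesis unfolding P_def by blast
    qed
  qed
  have Pn: "P ((A ^^ n) (new_label t i))" for n
  proof (induct n)
    case 0 then show ?case unfolding P_def by (metis funpow_0)
  next
    case (Suc n) then show ?case using step by simp
  qed
  have "new_label t i \<in> {1..m}" "new_label t j \<in> {1..m}" using i j t m
    by (auto simp: new_label_def)
  then obtain n where "(A ^^ n) (new_label t i) = new_label t j"
    using A unfolding A_def is_m_cycle_def by blast
  hence "P (new_label t j)" using Pn by metis
  then obtain k where "new_label t j = new_label t ((\<gamma> ^^ k) i)"
    unfolding P_def using nl_ne by blast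
  thus ?thesis using nl_inj by metis
qed



definition conj :: "nat \<Rightarrow> (nat \<Rightarrow> nat) \<Rightarrow> (nat \<Rightarrow> nat)" where
  "conj m p = rho m 0 \<circ> p \<circ> rhoi m 0"

definition gen :: "nat \<Rightarrow> (nat \<Rightarrow> nat) \<Rightarrow> ((nat \<Rightarrow> nat) \<Rightarrow> complex)" where
  "gen m p = basis_el (conj m p) - basis_el p"

lemma vass_tele:
  assumes "1 \<le> m"
  shows "vass m \<gamma> q {1..m-1} = basis_el (alpha m \<gamma> q 0) - basis_el (alpha m \<gamma> q (m-1))"
proof -
  define f where "f j = basis_el (alpha m \<gamma> q j)" for j
  have "{1..m-1} = Suc ` {..<m-1}" using assms
    by (auto simp: image_iff) (metis Suc_pred' le_simps(3) lessThan_iff not_le)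
  hence "vass m \<gamma> q {1..m-1} = (\<Sum>j<m-1. f (Suc j - 1) - f (Suc j))"
    unfolding vass_def f_def by (simp add: sum.reindex)
  also have "\<dots> = (\<Sum>j<m-1. f j - f (Suc j))" by simp
  also have "\<dots> = f 0 - f (m - 1)" by (rule sum_lessThan_telescope')
  finally show ?thesis unfolding f_def .
qed

lemma mcyc_conj_rho:
  assumes "is_m_cycle m p" "t < m"
  shows "is_m_cycle m (rho m t \<circ> p \<circ> rhoi m t)"
  using mcyc_conj[OF rho_permutes[OF assms(2)] rho_rhoi[OF assms(2)] rhoi_rho[OF assms(2)] assms(1)] .

lemma conj_mcyc: "is_m_cycle m p \<Longrightarrow> 1 \<le> m \<Longrightarrow> is_m_cycle m (conj m p)"
  unfolding conj_def by (rule mcyc_conj_rho) auto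

lemma vass_sub:
  assumes m: "2 \<le> m" and x: "x \<in> vass_cyc m"
  shows "\<exists>p. is_m_cycle m p \<and> x = gen m p"
proof -
  obtain \<gamma> q v where x: "x = vass m \<gamma> q v" and g: "\<gamma> permutes {1..m-1}"
    and q: "q = None \<or> (\<exists>i\<in>{1..m-1}. q = Some i)" and v: "is_cycle_of (m - 1) \<gamma> v"
    and c: "\<forall>j\<in>v. is_m_cycle m (alpha m \<gamma> q (j - 1)) \<and> is_m_cycle m (alpha m \<gamma> q j)"
    using x unfolding vass_cyc_def by blast
  obtain i where i: "i \<in> {1..m-1}" and vi: "v = {(\<gamma> ^^ k) i | k. True}"
    using v unfolding is_cycle_of_def by blast
  have iv: "i \<in> v" unfolding vi by (metis (mono_tags, lifting) funpow_0 mem_Collect_eq)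
  have ai: "is_m_cycle m (alpha m \<gamma> q i)" using c iv by blast
  obtain q' where q': "q = Some q'" "q' \<in> {1..m-1}"
  proof (cases q)
    case None
    have "alpha m \<gamma> q i (i + 1) = i + 1" unfolding alpha_def None by simp
    moreover have "i + 1 \<in> {1..m}" using i by auto
    ultimately show ?thesis using mcyc_no_fix[OF ai m] by blast
  next
    case (Some a) then show ?thesis using q that by auto
  qed
  have vall: "v = {1..m-1}"
  proof
    show "v \<subseteq> {1..m-1}" unfolding vi using gpow_in[OF g i] by blast
    show "{1..m-1} \<subseteq> v"
    proof
      fix j assume j: "j \<in> {1..m-1}"
      have "\<exists>k. (\<gamma> ^^ k) i = j"
        by (rule alpha_cover[OF m g q'(2) _ _ i j, of i]) (use i ai q'(1) in auto)
      thus "j \<in> v" unfolding vi by blast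
    qed
  qed
  have top: "is_m_cycle m (alpha m \<gamma> q (m-1))" using c vall m by auto
  have "alpha m \<gamma> q 0 = conj m (alpha m \<gamma> q (m-1))"
    unfolding conj_def q'(1) by (rule alpha_conj[OF m g q'(2)]) simp
  moreover have "x = basis_el (alpha m \<gamma> q 0) - basis_el (alpha m \<gamma> q (m-1))"
    unfolding x vall using vass_tele m by simp
  ultimately show ?thesis using top unfolding gen_def by metis
qed

lemma gen_in:
  assumes m: "2 \<le> m" and p: "is_m_cycle m p"
  shows "gen m p \<in> vass_cyc m"
proof -
  have pp: "p permutes {1..m}" using p by (simp add: is_m_cycle_def)
  obtain q where qp: "p q = m" using pp by (metis permutes_surj surjD)
  have q: "q \<in> {1..m}"
  proof (rule ccontr)
    assume "q \<notin> {1..m}" hence "p q = q" using pp by (simp add: permutes_not_in)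
    thus False using qp \<open>q \<notin> {1..m}\<close> m by auto
  qed
  have qm: "q \<noteq> m" using mcyc_no_fix[OF p m q] qp by auto
  hence q1: "q \<in> {1..m-1}" using q by auto
  define \<gamma> where "\<gamma> = p \<circ> Transposition.transpose q m"
  have gS: "\<gamma> permutes {1..m}" unfolding \<gamma>_def
    using q m by (intro permutes_compose pp permutes_swap_id) auto
  have gm: "\<gamma> m = m" unfolding \<gamma>_def using qp by simp
  have g: "\<gamma> permutes {1..m-1}"
  proof (rule permutes_superset[OF gS])
    fix x assume "x \<in> {1..m} - {1..m-1}" hence "x = m" by auto
    thus "\<gamma> x = x" using gm by simp
  qed
  have gi: "\<And>z. z \<in> {1..m-1} \<Longrightarrow> \<gamma> z \<in> {1..m-1}" using permutes_in_image[OF g] by blast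
  have pinj: "inj p" using pp permutes_inj by blast
  have top: "alpha m \<gamma> (Some q) (m-1) = p"
  proof
    fix y
    show "alpha m \<gamma> (Some q) (m-1) y = p y"
    proof (cases "y = m")
      case True
      have "\<gamma> q = p m" unfolding \<gamma>_def by simp
      then show ?thesis using alpha_top[of m \<gamma> q, OF m gi[OF q1]] True by simp
    next
      case False
      show ?thesis
      proof (cases "y \<in> {1..m}")
        case True
        hence y1: "y \<in> {1..m-1}" using False by auto
        show ?thesis
        proof (cases "q = y")
          case True then show ?thesis using alpha_old[of m y \<gamma> q, OF m y1 gi[OF y1]] qp by simp
        next
          case False
          have "\<gamma> y = p y" unfolding \<gamma>_def using False \<open>y \<noteq> m\<close>
            by (simp add: transpose_apply_other)
          then show ?thesis using alpha_old[of m y \<gamma> q, OF m y1 gi[OF y1]] False by simp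
        qed
      next
        case False
        have "alpha m \<gamma> (Some q) (m-1) y = y" unfolding alpha_def using False \<open>y \<noteq> m\<close> m by auto
        then show ?thesis using False pp by (simp add: permutes_not_in)
      qed
    qed
  qed
  have allc: "is_m_cycle m (alpha m \<gamma> (Some q) t)" if "t \<le> m - 1" for t
    unfolding alpha_conj[OF m g q1 that] top using mcyc_conj_rho[OF p] that m by simp
  have cyc: "is_cycle_of (m - 1) \<gamma> {1..m-1}"
    unfolding is_cycle_of_def
  proof (intro bexI[of _ 1])
    show "{1..m-1} = {(\<gamma> ^^ k) 1 | k. True}"
    proof
      show "{(\<gamma> ^^ k) 1 | k. True} \<subseteq> {1..m-1}" using gpow_in[OF g, of 1] m by auto
      show "{1..m-1} \<subseteq> {(\<gamma> ^^ k) 1 | k. True}"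
      proof
        fix j assume j: "j \<in> {1..m-1}"
        have "\<exists>k. (\<gamma> ^^ k) 1 = j"
          by (rule alpha_cover[OF m g q1 _ allc[of "m-1"]]) (use m j in auto)
        thus "j \<in> {(\<gamma> ^^ k) 1 | k. True}" by auto
      qed
    qed
  qed (use m in auto)
  have eq: "gen m p = vass m \<gamma> (Some q) {1..m-1}"
  proof -
    have "vass m \<gamma> (Some q) {1..m-1} = basis_el (alpha m \<gamma> (Some q) 0) - basis_el (alpha m \<gamma> (Some q) (m-1))"
      using vass_tele[of m] m by simp
    also have "alpha m \<gamma> (Some q) 0 = conj m p"
      unfolding conj_def using alpha_conj[OF m g q1, of 0] top by simp
    finally show ?thesis unfolding gen_def using top by metis
  qed
  show ?thesis unfolding vass_cyc_def eq
    using g q1 cyc allc m by force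
qed

lemma vass_cyc_eq: "2 \<le> m \<Longrightarrow> vass_cyc m = gen m ` {p. is_m_cycle m p}"
  using vass_sub gen_in by blast



lemma cyc_pow_nth:
  assumes "distinct L" "a < length L"
  shows "((cycle_of_list L) ^^ n) (L ! a) = L ! ((n + a) mod length L)"
proof -
  have "((cycle_of_list L) ^^ n) (L ! a) = map ((cycle_of_list L) ^^ n) L ! a"
    using assms by simp
  also have "\<dots> = rotate n L ! a" using cyclic_rotation[OF assms(1)] by simp
  also have "\<dots> = L ! ((n + a) mod length L)" using nth_rotate[OF assms(2)] by simp
  finally show ?thesis .
qed

lemma G_mcyc:
  assumes xs: "xs \<in> permutations_of_set {1..m-1}" and m: "1 \<le> m"
  shows "is_m_cycle m (cycle_of_list (m # xs))"
proof -
  define L where "L = m # xs"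
  have dL: "distinct L" and sL: "set L = {1..m}" using xs m
    unfolding L_def permutations_of_set_def by auto
  have lL: "length L = m" using distinct_card[OF dL] sL by simp
  show ?thesis unfolding is_m_cycle_def L_def[symmetric]
  proof (intro conjI ballI)
    show "cycle_of_list L permutes {1..m}" using cycle_permutes[of L] sL by simp
    fix i j assume "i \<in> {1..m}" "j \<in> {1..m}"
    hence "i \<in> set L" "j \<in> set L" using sL by auto
    then obtain a b where ab: "a < m" "b < m" "i = L ! a" "j = L ! b"
      using lL unfolding in_set_conv_nth by auto
    have "((cycle_of_list L) ^^ (b + m - a)) i = L ! ((b + m - a + a) mod m)"
      using cyc_pow_nth[OF dL, of a "b + m - a"] ab lL by simp
    also have "(b + m - a + a) mod m = b" using ab by simp
    finally show "\<exists>k. (cycle_of_list L ^^ k) i = j" using ab by blast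
  qed
qed

lemma G_recover:
  fixes m :: nat
  assumes xs: "xs \<in> permutations_of_set {1..m-1}" and m: "1 \<le> m"
  shows "xs = map (\<lambda>k. ((cycle_of_list (m # xs)) ^^ Suc k) m) [0..<m-1]"
proof -
  define L where "L = m # xs"
  have dL: "distinct L" and sL: "set L = {1..m}" using xs m
    unfolding L_def permutations_of_set_def by auto
  have lL: "length L = m" using distinct_card[OF dL] sL by simp
  hence lx: "length xs = m - 1" unfolding L_def by simp
  show ?thesis
  proof (rule nth_equalityI)
    show "length xs = length (map (\<lambda>k. ((cycle_of_list (m # xs)) ^^ Suc k) m) [0..<m-1])"
      using lx by simp
    fix k assume k: "k < length xs"
    have "((cycle_of_list L) ^^ Suc k) (L ! 0) = L ! ((Suc k + 0) mod m)"
      using cyc_pow_nth[OF dL, of 0 "Suc k"] lL m by simp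
    also have "\<dots> = xs ! k" using k lx unfolding L_def by simp
    finally show "xs ! k = map (\<lambda>k. ((cycle_of_list (m # xs)) ^^ Suc k) m) [0..<m-1] ! k"
      using k lx unfolding L_def by simp
  qed
qed

lemma G_inj: fixes m :: nat assumes "1 \<le> m" shows "inj_on (\<lambda>xs. cycle_of_list (m # xs)) (permutations_of_set {1..m-1})"
proof (rule inj_onI)
  fix xs ys :: "nat list" assume "xs \<in> permutations_of_set {1..m-1}" "ys \<in> permutations_of_set {1..m-1}"
    "cycle_of_list (m # xs) = cycle_of_list (m # ys)"
  thus "xs = ys" using G_recover[of xs m] G_recover[of ys m] assms by simp
qed

lemma G_surj:
  assumes p: "is_m_cycle m p" and m: "1 \<le> m"
  shows "\<exists>xs \<in> permutations_of_set {1..m-1}. cycle_of_list (m # xs) = p"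
proof -
  have pp: "p permutes {1..m}" using p by (simp add: is_m_cycle_def)
  have perm: "permutation p" using pp permutation_permutes by blast
  define L where "L = support p m"
  have dL: "distinct L" unfolding L_def by (rule cycle_of_permutation[OF perm])
  have sL: "set L = {1..m}"
  proof -
    have "set L = range (\<lambda>i. (p ^^ i) m)" unfolding L_def by (rule support_set[OF perm])
    also have "\<dots> = {1..m}"
    proof
      show "range (\<lambda>i. (p ^^ i) m) \<subseteq> {1..m}" using gpow_in[OF pp, of m] m by auto
      show "{1..m} \<subseteq> range (\<lambda>i. (p ^^ i) m)"
      proof
        fix j assume "j \<in> {1..m}"
        moreover have "m \<in> {1..m}" using m by simp
        ultimately obtain k where "(p ^^ k) m = j" using p unfolding is_m_cycle_def by blast
        thus "j \<in> range (\<lambda>i. (p ^^ i) m)" by (metis rangeI)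
      qed
    qed
    finally show ?thesis .
  qed
  have lL: "length L = m" using distinct_card[OF dL] sL by simp
  have lp: "least_power p m = m" using lL unfolding L_def by simp
  have Lnth: "L ! a = (p ^^ a) m" if "a < m" for a
    using that lp unfolding L_def by simp
  have Lne: "L \<noteq> []" using lL m by auto
  have "hd L = m" using hd_conv_nth[OF Lne] Lnth[of 0] m by simp
  hence L0: "L = m # tl L" using list.collapse[OF Lne] by simp
  have "cycle_of_list L = p"
  proof
    fix y
    show "cycle_of_list L y = p y"
    proof (cases "y \<in> set L")
      case True
      then obtain a where a: "a < m" "y = L ! a" using lL unfolding in_set_conv_nth by auto
      have "cycle_of_list L y = L ! ((1 + a) mod m)"
        using cyc_pow_nth[OF dL, of a 1] a lL by simp
      also have "\<dots> = (p ^^ Suc a) m"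
      proof (cases "Suc a < m")
        case True then show ?thesis using Lnth by simp
      next
        case False
        hence "Suc a = m" using a by simp
        moreover have "(p ^^ least_power p m) m = m" by (rule least_power_of_permutation(1)[OF perm])
        ultimately show ?thesis using Lnth[of 0] m lp by simp
      qed
      also have "\<dots> = p y" using a Lnth by simp
      finally show ?thesis .
    next
      case False
      then show ?thesis using id_outside_supp[OF False] pp sL by (simp add: permutes_not_in)
    qed
  qed
  moreover have "tl L \<in> permutations_of_set {1..m-1}"
  proof -
    have "distinct (m # tl L)" using dL L0 by simp
    moreover have "set (m # tl L) = {1..m}" using sL L0 by simp
    ultimately have "set (tl L) = {1..m} - {m}" "distinct (tl L)" by auto
    moreover have "{1..m} - {m} = {1..m-1}" by auto
    ultimately show ?thesis unfolding permutations_of_set_def by simp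
  qed
  ultimately show ?thesis using L0 by (intro bexI[of _ "tl L"]) simp_all
qed

lemma card_cyc: "1 \<le> m \<Longrightarrow> card {p. is_m_cycle m p} = fact (m - 1)"
proof -
  assume m: "1 \<le> m"
  have "{p. is_m_cycle m p} = (\<lambda>xs. cycle_of_list (m # xs)) ` permutations_of_set {1..m-1}"
    using G_mcyc[OF _ m] G_surj[OF _ m] by blast
  hence "card {p. is_m_cycle m p} = card (permutations_of_set {1..m-1})"
    using card_image[OF G_inj[OF m]] by simp
  thus ?thesis by simp
qed



lemma inv_mod_prime:
  fixes a m :: nat
  assumes "prime m" "0 < a" "a < m"
  shows "\<exists>x. (a * x) mod m = 1"
proof -
  have "\<not> m dvd a" using assms by (auto dest: dvd_imp_le)
  hence "coprime m a" using prime_imp_coprime[OF assms(1)] by blast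
  hence g: "gcd a m = 1" by (simp add: coprime_iff_gcd_eq_1 gcd.commute)
  obtain x y where "a * x = m * y + gcd a m" using bezout_nat[of a m] assms(2) by auto
  hence "a * x = m * y + 1" using g by simp
  hence "(a * x) mod m = (1 + m * y) mod m" by (simp add: add.commute)
  also have "\<dots> = 1 mod m" by (rule mod_mult_self2)
  also have "\<dots> = 1" using prime_gt_1_nat[OF assms(1)] by simp
  finally show ?thesis by blast
qed

lemma c_pow:
  assumes "y \<in> {1..m}"
  shows "(rho m 0 ^^ k) y = (y - 1 + k) mod m + 1"
proof (induct k)
  case 0
  have "y - 1 < m" using assms by auto
  then show ?case using assms by simp
next
  case (Suc k)
  have m: "0 < m" using assms by simp
  define z where "z = (y - 1 + k) mod m"
  have z: "z < m" unfolding z_def using m by simp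
  have "(rho m 0 ^^ Suc k) y = rho m 0 (z + 1)" using Suc by (simp add: z_def)
  also have "\<dots> = (if z + 1 < m then z + 2 else 1)" using z by (auto simp: rho_def)
  also have "\<dots> = (y - 1 + Suc k) mod m + 1"
  proof -
    have "(y - 1 + k) mod m < m" using m by simp
    thus ?thesis unfolding z_def by (auto simp add: mod_Suc)
  qed
  finally show ?case .
qed

lemma c_out: "y \<notin> {1..m} \<Longrightarrow> 0 < m \<Longrightarrow> (rho m 0 ^^ k) y = y"
  by (rule permutes_not_in[OF permutes_funpow[OF rho_permutes]])

lemma c_m: "0 < m \<Longrightarrow> rho m 0 ^^ m = id"
proof
  fix y assume m: "0 < m"
  show "(rho m 0 ^^ m) y = id y"
  proof (cases "y \<in> {1..m}")
    case True
    have "(rho m 0 ^^ m) y = (y - 1 + m) mod m + 1" by (rule c_pow[OF True])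
    also have "(y - 1 + m) mod m = (y - 1) mod m" by (rule mod_add_self2)
    also have "(y - 1) mod m = y - 1" using True by auto
    finally show ?thesis using True by simp
  next
    case False then show ?thesis using c_out m by simp
  qed
qed

lemma pow_inv_comp: fixes f g :: "'a \<Rightarrow> 'a" assumes gf: "g \<circ> f = id" shows "(g ^^ k) \<circ> (f ^^ k) = id"
proof (induct k)
  case (Suc k)
  have e1: "g ^^ Suc k = g ^^ k \<circ> g" by (rule funpow_Suc_right)
  have e2: "f ^^ Suc k = f \<circ> f ^^ k" by simp
  have "(g ^^ Suc k) \<circ> (f ^^ Suc k) = (g ^^ k) \<circ> (g \<circ> f) \<circ> (f ^^ k)"
    unfolding e1 e2 by (simp only: comp_assoc)
  also have "\<dots> = id" by (simp only: gf comp_id Suc)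
  finally show ?case .
qed simp

lemma ci_m: "0 < m \<Longrightarrow> rhoi m 0 ^^ m = id"
  using pow_inv_comp[OF rhoi_rho[of 0 m], of m] c_m by simp

lemma conj_pow: "(conj m ^^ k) p = (rho m 0 ^^ k) \<circ> p \<circ> (rhoi m 0 ^^ k)"
proof (induct k)
  case (Suc k)
  note IH = Suc
  have "(conj m ^^ Suc k) p = conj m ((conj m ^^ k) p)" by simp
  also have "\<dots> = rho m 0 \<circ> ((rho m 0 ^^ k) \<circ> p \<circ> (rhoi m 0 ^^ k)) \<circ> rhoi m 0"
    unfolding IH conj_def ..
  also have "\<dots> = (rho m 0 ^^ Suc k) \<circ> p \<circ> (rhoi m 0 ^^ Suc k)"
  proof -
    have e1: "rhoi m 0 ^^ Suc k = rhoi m 0 ^^ k \<circ> rhoi m 0" by (rule funpow_Suc_right)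
    have e2: "rho m 0 ^^ Suc k = rho m 0 \<circ> rho m 0 ^^ k" by simp
    show ?thesis unfolding e1 e2 by (simp only: comp_assoc)
  qed
  finally show ?case .
qed simp

lemma conj_m: "0 < m \<Longrightarrow> (conj m ^^ m) p = p"
  using conj_pow[of m m p] c_m ci_m by simp

lemma conj_mod: assumes "0 < m" shows "(conj m ^^ n) p = (conj m ^^ (n mod m)) p"
  by (rule funpow_mod_eq[OF conj_m[OF assms], symmetric])

lemma conj_back: "0 < m \<Longrightarrow> i \<le> m \<Longrightarrow> (conj m ^^ (m - i)) ((conj m ^^ i) p) = p"
  by (metis conj_m funpow_add le_add_diff_inverse2 o_apply)

lemma conj_fix_pow: "conj m p = p \<Longrightarrow> (conj m ^^ n) p = p"
  by (induct n) auto

lemma conj_prime: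
  assumes m: "prime m" and k: "0 < k" "k < m" and fx: "(conj m ^^ k) p = p"
  shows "conj m p = p"
proof -
  have m0: "0 < m" "1 < m" using prime_gt_1_nat[OF m] by auto
  obtain x where x: "(k * x) mod m = 1" using inv_mod_prime[OF m k] by blast
  have "((conj m ^^ k) ^^ x) p = p" by (induct x) (simp_all add: fx)
  hence "(conj m ^^ (k * x)) p = p" by (simp add: funpow_mult)
  hence "(conj m ^^ ((k * x) mod m)) p = p" using conj_mod[OF m0(1)] by metis
  thus ?thesis using x by simp
qed

definition orb :: "nat \<Rightarrow> (nat \<Rightarrow> nat) \<Rightarrow> (nat \<Rightarrow> nat) set" where
  "orb m p = range (\<lambda>k. (conj m ^^ k) p)"

lemma orb_fin: assumes m: "0 < m" shows "orb m p = (\<lambda>k. (conj m ^^ k) p) ` {..<m}"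
proof
  show "orb m p \<subseteq> (\<lambda>k. (conj m ^^ k) p) ` {..<m}"
  proof
    fix q assume "q \<in> orb m p"
    then obtain k where "q = (conj m ^^ k) p" unfolding orb_def by auto
    hence "q = (conj m ^^ (k mod m)) p" using conj_mod[OF m] by metis
    moreover have "k mod m \<in> {..<m}" using m by simp
    ultimately show "q \<in> (\<lambda>k. (conj m ^^ k) p) ` {..<m}" by blast
  qed
  show "(\<lambda>k. (conj m ^^ k) p) ` {..<m} \<subseteq> orb m p" unfolding orb_def by auto
qed

lemma orb_self: "p \<in> orb m p"
  unfolding orb_def by (metis funpow_0 rangeI)

lemma orb_sub: assumes "q \<in> orb m p" shows "orb m q \<subseteq> orb m p"
proof
  fix r assume "r \<in> orb m q"
  then obtain j where j: "r = (conj m ^^ j) q" unfolding orb_def by auto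
  obtain k where k: "q = (conj m ^^ k) p" using assms unfolding orb_def by auto
  have "r = (conj m ^^ (j + k)) p" unfolding j k funpow_add by simp
  thus "r \<in> orb m p" unfolding orb_def by blast
qed

lemma orb_sym: "0 < m \<Longrightarrow> q \<in> orb m p \<Longrightarrow> p \<in> orb m q"
proof -
  assume m: "0 < m" "q \<in> orb m p"
  then obtain i where i: "q = (conj m ^^ i) p" unfolding orb_def by auto
  hence "q = (conj m ^^ (i mod m)) p" using conj_mod[OF m(1)] by metis
  hence "(conj m ^^ (m - i mod m)) q = p" using conj_back[OF m(1), of "i mod m" p] m(1) by simp
  thus ?thesis unfolding orb_def by (metis rangeI)
qed

lemma orb_eq: "0 < m \<Longrightarrow> q \<in> orb m p \<Longrightarrow> orb m q = orb m p"
  using orb_sub orb_sym by blast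

lemma orb_card:
  assumes m: "prime m" and np: "conj m p \<noteq> p"
  shows "card (orb m p) = m"
proof -
  have m0: "0 < m" using prime_gt_1_nat[OF m] by auto
  have "inj_on (\<lambda>k. (conj m ^^ k) p) {..<m}"
  proof (rule inj_onI)
    fix i j assume ij: "i \<in> {..<m}" "j \<in> {..<m}" "(conj m ^^ i) p = (conj m ^^ j) p"
    show "i = j"
    proof (rule ccontr)
      assume "i \<noteq> j"
      then consider "i < j" | "j < i" by linarith
      then show False
      proof cases
        case 1
        have "(conj m ^^ j) p = (conj m ^^ i) ((conj m ^^ (j - i)) p)"
          using 1 by (metis funpow_add le_add_diff_inverse less_imp_le o_apply)
        hence "(conj m ^^ (m - i)) ((conj m ^^ i) ((conj m ^^ (j - i)) p)) = (conj m ^^ (m - i)) ((conj m ^^ i) p)"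
          using ij(3) by simp
        moreover have "(conj m ^^ (m - i)) ((conj m ^^ i) ((conj m ^^ (j - i)) p)) = (conj m ^^ (j - i)) p"
          by (rule conj_back[OF m0]) (use ij in simp)
        moreover have "(conj m ^^ (m - i)) ((conj m ^^ i) p) = p"
          by (rule conj_back[OF m0]) (use ij in simp)
        ultimately have "(conj m ^^ (j - i)) p = p" by simp
        moreover have "j - i < m" "0 < j - i" using ij 1 by auto
        ultimately show False using conj_prime[OF m, of "j - i" p] np by blast
      next
        case 2
        have "(conj m ^^ i) p = (conj m ^^ j) ((conj m ^^ (i - j)) p)"
          using 2 by (metis funpow_add le_add_diff_inverse less_imp_le o_apply)
        hence "(conj m ^^ (m - j)) ((conj m ^^ j) ((conj m ^^ (i - j)) p)) = (conj m ^^ (m - j)) ((conj m ^^ j) p)"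
          using ij(3) by simp
        moreover have "(conj m ^^ (m - j)) ((conj m ^^ j) ((conj m ^^ (i - j)) p)) = (conj m ^^ (i - j)) p"
          by (rule conj_back[OF m0]) (use ij in simp)
        moreover have "(conj m ^^ (m - j)) ((conj m ^^ j) p) = p"
          by (rule conj_back[OF m0]) (use ij in simp)
        ultimately have "(conj m ^^ (i - j)) p = p" by simp
        moreover have "i - j < m" "0 < i - j" using ij 2 by auto
        ultimately show False using conj_prime[OF m, of "i - j" p] np by blast
      qed
    qed
  qed
  thus ?thesis using orb_fin[OF m0, of p] card_image by fastforce
qed



lemma rho_comm_pow: "rho m 0 \<circ> (rho m 0 ^^ n) = (rho m 0 ^^ n) \<circ> rho m 0"
  by (metis funpow.simps(2) funpow_Suc_right)

lemma c_pow_mcyc: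
  assumes m: "prime m" and n: "0 < n" "n < m"
  shows "is_m_cycle m (rho m 0 ^^ n)"
  unfolding is_m_cycle_def
proof (intro conjI ballI)
  have m0: "0 < m" using prime_gt_1_nat[OF m] by simp
  show "(rho m 0 ^^ n) permutes {1..m}" by (rule permutes_funpow[OF rho_permutes[OF m0]])
  fix y z assume y: "y \<in> {1..m}" and z: "z \<in> {1..m}"
  obtain x where x: "(n * x) mod m = 1" using inv_mod_prime[OF m n] by blast
  define d where "d = z + m - y"
  have "((rho m 0 ^^ n) ^^ (x * d)) y = (rho m 0 ^^ (n * (x * d))) y" by (simp add: funpow_mult)
  also have "\<dots> = (y - 1 + n * (x * d)) mod m + 1" by (rule c_pow[OF y])
  also have "(y - 1 + n * (x * d)) mod m = (y - 1 + ((n * x) * d) mod m) mod m"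
    by (simp add: mult.assoc mod_add_right_eq)
  also have "((n * x) * d) mod m = d mod m"
    using mod_mult_left_eq[of "n * x" m d] x by simp
  also have "(y - 1 + d mod m) mod m = (y - 1 + d) mod m" by (simp add: mod_add_right_eq)
  also have "y - 1 + d = (z - 1) + m" using y z unfolding d_def by auto
  also have "((z - 1) + m) mod m = (z - 1) mod m" by (rule mod_add_self2)
  also have "(z - 1) mod m = z - 1" using z by auto
  finally show "\<exists>k. ((rho m 0 ^^ n) ^^ k) y = z" using z by auto
qed

lemma c_pow_fix:
  assumes "0 < m"
  shows "conj m (rho m 0 ^^ n) = rho m 0 ^^ n"
proof -
  have "conj m (rho m 0 ^^ n) = (rho m 0 ^^ n) \<circ> (rho m 0 \<circ> rhoi m 0)"
    unfolding conj_def using rho_comm_pow[of m n] by (simp add: comp_assoc)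
  thus ?thesis using rho_rhoi[OF assms] by simp
qed

lemma fix_comm:
  assumes m: "0 < m" and fx: "conj m p = p"
  shows "p ((rho m 0 ^^ k) y) = (rho m 0 ^^ k) (p y)"
proof -
  have c1: "rho m 0 \<circ> p = p \<circ> rho m 0"
  proof -
    have "p \<circ> rho m 0 = rho m 0 \<circ> p \<circ> (rhoi m 0 \<circ> rho m 0)"
      using fx unfolding conj_def by (metis comp_assoc)
    thus ?thesis using rhoi_rho[OF m] by simp
  qed
  show ?thesis
  proof (induct k arbitrary: y)
    case (Suc k)
    have "p ((rho m 0 ^^ Suc k) y) = p ((rho m 0 ^^ k) (rho m 0 y))"
      by (simp add: funpow_swap1)
    also have "\<dots> = (rho m 0 ^^ k) (p (rho m 0 y))" by (rule Suc)
    also have "p (rho m 0 y) = rho m 0 (p y)" using c1 by (metis comp_apply)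
    finally show ?case by (simp add: funpow_swap1)
  qed simp
qed

lemma one_pow: "y \<in> {1..m} \<Longrightarrow> (rho m 0 ^^ (y - 1)) 1 = y"
proof -
  assume y: "y \<in> {1..m}"
  have "(rho m 0 ^^ (y - 1)) 1 = (1 - 1 + (y - 1)) mod m + 1" by (rule c_pow) (use y in auto)
  also have "\<dots> = y" using y by auto
  finally show ?thesis .
qed

lemma card_fix:
  assumes m: "prime m"
  shows "card {p. is_m_cycle m p \<and> conj m p = p} = m - 1"
proof -
  have m0: "0 < m" "2 \<le> m" using prime_gt_1_nat[OF m] by auto
  define Fx where "Fx = {p. is_m_cycle m p \<and> conj m p = p}"
  have inj: "inj_on (\<lambda>p. p 1) Fx"
  proof (rule inj_onI)
    fix p p' assume p: "p \<in> Fx" "p' \<in> Fx" "p 1 = p' 1"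
    show "p = p'"
    proof
      fix y
      show "p y = p' y"
      proof (cases "y \<in> {1..m}")
        case True
        have f1: "conj m p = p" "conj m p' = p'" using p(1,2) unfolding Fx_def by auto
        have "p y = p ((rho m 0 ^^ (y - 1)) 1)" using one_pow[OF True] by simp
        also have "\<dots> = (rho m 0 ^^ (y - 1)) (p 1)" by (rule fix_comm[OF m0(1) f1(1)])
        finally have e1: "p y = (rho m 0 ^^ (y - 1)) (p 1)" .
        have "p' y = p' ((rho m 0 ^^ (y - 1)) 1)" using one_pow[OF True] by simp
        also have "\<dots> = (rho m 0 ^^ (y - 1)) (p' 1)" by (rule fix_comm[OF m0(1) f1(2)])
        finally have e2: "p' y = (rho m 0 ^^ (y - 1)) (p' 1)" .
        show ?thesis using e1 e2 p(3) by simp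
      next
        case False
        have "p permutes {1..m}" "p' permutes {1..m}" using p(1,2) unfolding Fx_def is_m_cycle_def by auto
        then show ?thesis using False by (simp add: permutes_not_in)
      qed
    qed
  qed
  have img: "(\<lambda>p. p 1) ` Fx = {2..m}"
  proof
    show "(\<lambda>p. p 1) ` Fx \<subseteq> {2..m}"
    proof
      fix j assume "j \<in> (\<lambda>p. p 1) ` Fx"
      then obtain p where p: "p \<in> Fx" "j = p 1" by blast
      have pc: "is_m_cycle m p" using p unfolding Fx_def by simp
      have one: "(1::nat) \<in> {1..m}" using m0 by simp
      have "p 1 \<in> {1..m}" using permutes_in_image[OF mcyc_permutes[OF pc]] one by blast
      moreover have "p 1 \<noteq> 1" using mcyc_no_fix[OF pc m0(2) one] .
      ultimately show "j \<in> {2..m}" using p by auto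
    qed
    show "{2..m} \<subseteq> (\<lambda>p. p 1) ` Fx"
    proof
      fix j assume j: "j \<in> {2..m}"
      have "rho m 0 ^^ (j - 1) \<in> Fx" unfolding Fx_def
        using c_pow_mcyc[OF m, of "j - 1"] c_pow_fix[OF m0(1)] j by auto
      moreover have "(rho m 0 ^^ (j - 1)) 1 = j" using one_pow[of j m] j by auto
      ultimately show "j \<in> (\<lambda>p. p 1) ` Fx" by (metis image_eqI)
    qed
  qed
  have "card Fx = card {2..m}" using card_image[OF inj] img by simp
  thus ?thesis unfolding Fx_def by simp
qed

lemma finite_cyc: "finite {p. is_m_cycle m p}"
proof -
  have "{p. is_m_cycle m p} \<subseteq> {p. p permutes {1..m}}" by (auto simp: is_m_cycle_def)
  thus ?thesis using finite_permutations[of "{1..m}"] finite_subset by blast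
qed

lemma conj_pow_mcyc: "is_m_cycle m p \<Longrightarrow> 1 \<le> m \<Longrightarrow> is_m_cycle m ((conj m ^^ k) p)"
  by (induct k) (auto intro: conj_mcyc)

lemma partition_count:
  assumes m: "prime m"
  defines "Cy \<equiv> {p. is_m_cycle m p}" and "Fx \<equiv> {p. is_m_cycle m p \<and> conj m p = p}"
  shows "m * card (orb m ` (Cy - Fx)) = card Cy - card Fx"
proof -
  have m0: "0 < m" "1 \<le> m" using prime_gt_1_nat[OF m] by auto
  have sub: "orb m p \<subseteq> Cy - Fx" if p: "p \<in> Cy - Fx" for p
  proof
    fix q assume q: "q \<in> orb m p"
    then obtain k where k: "q = (conj m ^^ k) p" unfolding orb_def by auto
    have qc: "q \<in> Cy" using conj_pow_mcyc[of m p k] p m0 k unfolding Cy_def Fx_def by auto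
    have "conj m q \<noteq> q"
    proof
      assume fq: "conj m q = q"
      obtain j where "p = (conj m ^^ j) q" using orb_sym[OF m0(1) q] unfolding orb_def by auto
      hence "p = q" using conj_fix_pow[OF fq] by simp
      thus False using p fq unfolding Fx_def Cy_def by auto
    qed
    thus "q \<in> Cy - Fx" using qc unfolding Fx_def Cy_def by auto
  qed
  have U: "\<Union> (orb m ` (Cy - Fx)) = Cy - Fx"
    using sub orb_self by blast
  have fin: "finite (Cy - Fx)" using finite_cyc unfolding Cy_def by simp
  have "m * card (orb m ` (Cy - Fx)) = card (\<Union> (orb m ` (Cy - Fx)))"
  proof (rule card_partition)
    show "finite (orb m ` (Cy - Fx))" using fin by simp
    show "finite (\<Union> (orb m ` (Cy - Fx)))" using U fin by simp
    show "\<And>c. c \<in> orb m ` (Cy - Fx) \<Longrightarrow> card c = m"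
      using orb_card[OF m] unfolding Fx_def Cy_def by auto
    show "\<And>c1 c2. c1 \<in> orb m ` (Cy - Fx) \<Longrightarrow> c2 \<in> orb m ` (Cy - Fx) \<Longrightarrow> c1 \<noteq> c2 \<Longrightarrow> c1 \<inter> c2 = {}"
      using orb_eq[OF m0(1)] by blast
  qed
  also have "\<dots> = card (Cy - Fx)" using U by simp
  also have "\<dots> = card Cy - card Fx"
    using fin finite_cyc unfolding Cy_def Fx_def by (intro card_Diff_subset) auto
  finally show ?thesis .
qed



lemma orb_in_CF:
  assumes m: "prime m" and p: "is_m_cycle m p" "conj m p \<noteq> p" and q: "q \<in> orb m p"
  shows "is_m_cycle m q \<and> conj m q \<noteq> q"
proof -
  have m0: "0 < m" "1 \<le> m" using prime_gt_1_nat[OF m] by auto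
  obtain k where k: "q = (conj m ^^ k) p" using q unfolding orb_def by auto
  have qc: "is_m_cycle m q" using conj_pow_mcyc[of m p k] p m0 k by auto
  have "conj m q \<noteq> q"
  proof
    assume fq: "conj m q = q"
    obtain j where "p = (conj m ^^ j) q" using orb_sym[OF m0(1) q] unfolding orb_def by auto
    hence "p = q" using conj_fix_pow[OF fq] by simp
    thus False using p fq by auto
  qed
  thus ?thesis using qc by simp
qed

lemma gen_pow_span:
  assumes r: "is_m_cycle m r" and m: "1 \<le> m" and br: "basis_el r \<in> V.span X"
    and g: "gen m ` {p. is_m_cycle m p} \<subseteq> X"
  shows "basis_el ((conj m ^^ k) r) \<in> V.span X"
proof (induct k)
  case 0 then show ?case using br by simp
next
  case (Suc k)
  have c: "is_m_cycle m ((conj m ^^ k) r)" using conj_pow_mcyc[OF r m] .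
  have "gen m ((conj m ^^ k) r) \<in> V.span X" using g c V.span_base by blast
  hence "gen m ((conj m ^^ k) r) + basis_el ((conj m ^^ k) r) \<in> V.span X"
    using Suc V.span_add by blast
  moreover have "gen m ((conj m ^^ k) r) + basis_el ((conj m ^^ k) r) = basis_el ((conj m ^^ Suc k) r)"
    unfolding gen_def by simp
  ultimately show ?case by simp
qed

lemma gen_tele:
  "(\<Sum>i<n. gen m ((conj m ^^ i) r)) = basis_el ((conj m ^^ n) r) - basis_el r"
proof -
  have "(\<Sum>i<n. gen m ((conj m ^^ i) r)) = (\<Sum>i<n. basis_el ((conj m ^^ Suc i) r) - basis_el ((conj m ^^ i) r))"
    unfolding gen_def by simp
  also have "\<dots> = basis_el ((conj m ^^ n) r) - basis_el ((conj m ^^ 0) r)"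
    by (rule sum_lessThan_telescope)
  finally show ?thesis by simp
qed

lemma dim_mono_fin:
  assumes "A \<subseteq> V.span W" "finite W"
  shows "V.dim A \<le> V.dim W"
proof -
  obtain Bw where Bw: "Bw \<subseteq> W" "V.independent Bw" "W \<subseteq> V.span Bw" "card Bw = V.dim W"
    using V.basis_exists by blast
  have "V.span W \<subseteq> V.span Bw" using Bw(3) V.span_mono V.span_span by (metis)
  hence "A \<subseteq> V.span Bw" using assms(1) by blast
  hence "V.dim A \<le> card Bw" using V.dim_le_card finite_subset[OF Bw(1) assms(2)] by blast
  thus ?thesis using Bw(4) by simp
qed

lemma dim_main:
  assumes m: "prime m"
  defines "Cy \<equiv> {p. is_m_cycle m p}" and "Fx \<equiv> {p. is_m_cycle m p \<and> conj m p = p}"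
  defines "Ob \<equiv> orb m ` (Cy - Fx)"
  shows "card Cy \<le> V.dim (gen m ` Cy) + card Fx + card Ob"
    and "V.dim (gen m ` Cy) \<le> card Ob * (m - 1)"
proof -
  have m0: "0 < m" "1 \<le> m" "2 \<le> m" using prime_gt_1_nat[OF m] by auto
  define rep where "rep Q = (SOME x. x \<in> Q)" for Q :: "(nat \<Rightarrow> nat) set"
  define Reps where "Reps = rep ` Ob"
  have finCy: "finite Cy" unfolding Cy_def by (rule finite_cyc)
  have FxCy: "Fx \<subseteq> Cy" unfolding Fx_def Cy_def by auto
  have finFx: "finite Fx" using finite_subset[OF FxCy finCy] .
  have finOb: "finite Ob" unfolding Ob_def using finCy by simp
  have finReps: "finite Reps" unfolding Reps_def using finOb by simp
  have rep_in: "rep (orb m p) \<in> orb m p" for p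
    unfolding rep_def by (rule someI[of "\<lambda>x. x \<in> orb m p" p]) (rule orb_self)
  have rep_props: "rep (orb m p) \<in> Reps \<and> rep (orb m p) \<in> Cy - Fx \<and>
      (\<exists>k<m. p = (conj m ^^ k) (rep (orb m p)))" if p: "p \<in> Cy - Fx" for p
  proof -
    define r where "r = rep (orb m p)"
    have rO: "r \<in> orb m p" unfolding r_def by (rule rep_in)
    have "orb m p \<in> Ob" unfolding Ob_def using p by (rule imageI)
    hence r1: "r \<in> Reps" unfolding Reps_def r_def by (rule imageI)
    have pc: "is_m_cycle m p" "conj m p \<noteq> p" using p unfolding Cy_def Fx_def by auto
    have "is_m_cycle m r \<and> conj m r \<noteq> r" by (rule orb_in_CF[OF m pc rO])
    hence r2: "r \<in> Cy - Fx" unfolding Cy_def Fx_def by simp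
    have "p \<in> orb m r" using orb_sym[OF m0(1) rO] .
    hence "p \<in> (\<lambda>k. (conj m ^^ k) r) ` {..<m}" using orb_fin[OF m0(1), of r] by simp
    then obtain k where "k < m" "p = (conj m ^^ k) r" by auto
    thus ?thesis using r1 r2 unfolding r_def by blast
  qed
  define S where "S = Fx \<union> Reps"
  define X where "X = gen m ` Cy \<union> basis_el ` S"
  have finS: "finite S" unfolding S_def using finFx finReps by simp
  have genX: "gen m ` {p. is_m_cycle m p} \<subseteq> X" unfolding X_def Cy_def by (rule Un_upper1)
  have spanX: "basis_el ` Cy \<subseteq> V.span X"
  proof
    fix x assume "x \<in> basis_el ` Cy"
    then obtain p where p: "p \<in> Cy" "x = basis_el p" by blast
    show "x \<in> V.span X"
    proof (cases "p \<in> Fx")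
      case True
      hence "x \<in> X" unfolding X_def S_def p(2) by blast
      then show ?thesis by (rule V.span_base)
    next
      case False
      hence pCF: "p \<in> Cy - Fx" using p by simp
      define r where "r = rep (orb m p)"
      have rr: "r \<in> Reps" "r \<in> Cy - Fx" and "\<exists>k<m. p = (conj m ^^ k) r"
        using rep_props[OF pCF] unfolding r_def by auto
      then obtain k where k: "p = (conj m ^^ k) r" by blast
      have "basis_el r \<in> X" unfolding X_def S_def using rr(1) by blast
      hence br: "basis_el r \<in> V.span X" by (rule V.span_base)
      have rc: "is_m_cycle m r" using rr(2) unfolding Cy_def by simp
      have "basis_el ((conj m ^^ k) r) \<in> V.span X"
        by (rule gen_pow_span[OF rc m0(2) br genX])
      thus ?thesis using k p by simp
    qed
  qed
  have "card Cy = V.dim (basis_el ` Cy)" using dim_basis[OF finCy] by simp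
  also have "\<dots> \<le> V.dim X" by (rule dim_mono_fin[OF spanX]) (use finCy finS in \<open>simp add: X_def\<close>)
  also have "\<dots> \<le> V.dim (gen m ` Cy) + card (basis_el ` S)"
    unfolding X_def by (rule dim_union_le) (use finCy finS in simp_all)
  also have "card (basis_el ` S) \<le> card S" by (rule card_image_le[OF finS])
  also have "card S \<le> card Fx + card Reps" unfolding S_def by (rule card_Un_le)
  also have "card Reps \<le> card Ob" unfolding Reps_def by (rule card_image_le[OF finOb])
  finally show "card Cy \<le> V.dim (gen m ` Cy) + card Fx + card Ob" by simp
  define T where "T = (\<lambda>(r, k). (conj m ^^ k) r) ` (Reps \<times> {..<m-1})"
  have finT: "finite T" unfolding T_def using finReps by simp
  have spanT: "gen m ` Cy \<subseteq> V.span (gen m ` T)"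
  proof
    fix x assume "x \<in> gen m ` Cy"
    then obtain p where p: "p \<in> Cy" "x = gen m p" by blast
    show "x \<in> V.span (gen m ` T)"
    proof (cases "p \<in> Fx")
      case True
      hence "x = 0" using p unfolding Fx_def gen_def by simp
      then show ?thesis by (simp add: V.span_zero)
    next
      case False
      hence pCF: "p \<in> Cy - Fx" using p by simp
      define r where "r = rep (orb m p)"
      have rr: "r \<in> Reps" and "\<exists>k<m. p = (conj m ^^ k) r"
        using rep_props[OF pCF] unfolding r_def by auto
      then obtain k where k: "k < m" "p = (conj m ^^ k) r" by blast
      have inS: "gen m ((conj m ^^ i) r) \<in> V.span (gen m ` T)" if "i < m - 1" for i
      proof -
        have "(r, i) \<in> Reps \<times> {..<m-1}" using rr that by simp
        hence "(conj m ^^ i) r \<in> T" unfolding T_def by (metis (no_types, lifting) case_prod_conv image_eqI)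
        hence "gen m ((conj m ^^ i) r) \<in> gen m ` T" by (rule imageI)
        thus ?thesis by (rule V.span_base)
      qed
      show ?thesis
      proof (cases "k < m - 1")
        case True
        then show ?thesis using inS[OF True] p k by simp
      next
        case False
        hence km: "k = m - 1" using k by simp
        have "(\<Sum>i<m. gen m ((conj m ^^ i) r)) = basis_el ((conj m ^^ m) r) - basis_el r"
          by (rule gen_tele)
        hence "(\<Sum>i<m. gen m ((conj m ^^ i) r)) = 0" using conj_m[OF m0(1), of r] by simp
        moreover have "(\<Sum>i<m. gen m ((conj m ^^ i) r)) = (\<Sum>i<m-1. gen m ((conj m ^^ i) r)) + gen m ((conj m ^^ (m-1)) r)"
          using m0 sum.lessThan_Suc[of "\<lambda>i. gen m ((conj m ^^ i) r)" "m - 1"] by simp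
        ultimately have "x = - (\<Sum>i<m-1. gen m ((conj m ^^ i) r))" using p k km
          by (simp add: eq_neg_iff_add_eq_0 add.commute)
        moreover have "(\<Sum>i<m-1. gen m ((conj m ^^ i) r)) \<in> V.span (gen m ` T)"
          by (rule V.span_sum) (use inS in simp)
        ultimately show ?thesis using V.span_neg by simp
      qed
    qed
  qed
  have "V.dim (gen m ` Cy) \<le> V.dim (gen m ` T)" by (rule dim_mono_fin[OF spanT]) (use finT in simp)
  also have "\<dots> \<le> card (gen m ` T)" by (rule V.dim_le_card) (use finT V.span_superset in auto)
  also have "\<dots> \<le> card T" using finT by (rule card_image_le)
  also have "\<dots> \<le> card (Reps \<times> {..<m-1})" unfolding T_def
    using finReps by (intro card_image_le) simp
  also have "\<dots> = card Reps * (m - 1)" by (simp add: card_cartesian_product)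
  also have "\<dots> \<le> card Ob * (m - 1)"
    using card_image_le[OF finOb, of rep] unfolding Reps_def by (rule mult_right_mono) simp
  finally show "V.dim (gen m ` Cy) \<le> card Ob * (m - 1)" .
qed

theorem mainTheorem19:
  fixes m :: nat
  assumes "prime m"
  shows "real (dimH m) = (fact (m - 1) - real (m - 1)) / real m + real m - 1"
proof -
  have m0: "2 \<le> m" "0 < m" using prime_gt_1_nat[OF assms] by auto
  define Cy where "Cy = {p. is_m_cycle m p}"
  define Fx where "Fx = {p. is_m_cycle m p \<and> conj m p = p}"
  define Ob where "Ob = orb m ` (Cy - Fx)"
  define D where "D = V.dim (gen m ` Cy)"
  have finCy: "finite Cy" unfolding Cy_def by (rule finite_cyc)
  have FxCy: "Fx \<subseteq> Cy" unfolding Fx_def Cy_def by auto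
  have "{basis_el p | p. is_m_cycle m p} = basis_el ` Cy" unfolding Cy_def by auto
  hence d1: "V.dim (cycle_span m) = card Cy"
    unfolding cycle_span_def using V.dim_span dim_basis[OF finCy] by simp
  have d2: "V.dim (V.span (vass_cyc m)) = D"
    unfolding D_def vass_cyc_eq[OF m0(1)] Cy_def using V.dim_span by simp
  have dh: "dimH m = card Cy - D" unfolding dimH_def d1 d2 ..
  have b1: "card Cy \<le> D + card Fx + card Ob" and b2: "D \<le> card Ob * (m - 1)"
    using dim_main[OF assms] unfolding D_def Cy_def Fx_def Ob_def by auto
  have pc: "m * card Ob = card Cy - card Fx"
    using partition_count[OF assms] unfolding Cy_def Fx_def Ob_def by simp
  have cf: "card Fx = m - 1" using card_fix[OF assms] unfolding Fx_def by simp
  have cc: "card Cy = fact (m - 1)" using card_cyc[of m] m0 unfolding Cy_def by simp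
  have le: "card Fx \<le> card Cy" using card_mono[OF finCy FxCy] .
  have mO: "m * card Ob = card Ob * (m - 1) + card Ob" using m0
    by (metis Suc_diff_1 mult.commute mult_Suc_right add.commute)
  have DO: "D = card Ob * (m - 1)" using b1 b2 pc le mO by linarith
  have dim_eq: "dimH m = (m - 1) + card Ob" using dh DO pc le mO cf by linarith
  have "real (m * card Ob) = real (fact (m - 1)) - real (m - 1)"
    using pc cf cc le by (simp add: of_nat_diff)
  hence "real (card Ob) = (fact (m - 1) - real (m - 1)) / real m"
    using m0 by (simp add: field_simps)
  thus ?thesis using dim_eq m0 by (simp add: of_nat_diff)
qed

end
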